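(* For every connected graph $G$ with at least two vertices, $h_1(G)\le 2\,h_2(G)+1$.
   Context: All graphs are finite, simple, undirected and connected. A configuration of $k$ agents is a $k$-tuple $(v_1,\dots,v_k)$ of pairwise distinct vertices of $G$ whose induced subgraph is connected (for $k=2$: an ordered pair of endpoints of an edge). Two configurations $(v_1,\dots,v_k)$, $(v'_1,\dots,v'_k)$ are adjacent if for every $i$ either $v_i=v'_i$ or $(v_i,v'_i)\in E$. A transition walk of length $l$ is a sequence $\mathcal C_0,\dots,\mathcal C_l$ of configurations with consecutive ones adjacent; it is spanning if every vertex of $G$ lies in some $\mathcal C_t$. $h_k(G)$ is the minimum length of a spanning transition walk with $k$ agents; $h_1(G)$ is thus the minimum length of a walk visiting all vertices. *)

theory Defs
  imports Main
begin

definition simple_graph :: "'a set \<Rightarrow> ('a \<times> 'a) set \<Rightarrow> bool" where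
  "simple_graph V E \<longleftrightarrow> finite V \<and> E \<subseteq> V \<times> V \<and> sym E \<and> (\<forall>v. (v, v) \<notin> E)"

definition induced_connected :: "('a \<times> 'a) set \<Rightarrow> 'a set \<Rightarrow> bool" where
  "induced_connected E S \<longleftrightarrow> S \<noteq> {} \<and>
     (\<forall>u\<in>S. \<forall>v\<in>S. (u, v) \<in> (E \<inter> (S \<times> S))\<^sup>*)"

definition connected_graph :: "'a set \<Rightarrow> ('a \<times> 'a) set \<Rightarrow> bool" where
  "connected_graph V E \<longleftrightarrow> simple_graph V E \<and> induced_connected E V"

definition configuration :: "'a set \<Rightarrow> ('a \<times> 'a) set \<Rightarrow> nat \<Rightarrow> 'a list \<Rightarrow> bool" where
  "configuration V E k c \<longleftrightarrow> length c = k \<and> distinct c \<and> set c \<subseteq> V \<and>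
     induced_connected E (set c)"

definition adjacent_conf :: "('a \<times> 'a) set \<Rightarrow> 'a list \<Rightarrow> 'a list \<Rightarrow> bool" where
  "adjacent_conf E c c' \<longleftrightarrow> length c = length c' \<and>
     (\<forall>i < length c. c ! i = c' ! i \<or> (c ! i, c' ! i) \<in> E)"

text \<open>A transition walk C_0, ..., C_l is a nonempty list of configurations; its length is l.\<close>
definition transition_walk :: "'a set \<Rightarrow> ('a \<times> 'a) set \<Rightarrow> nat \<Rightarrow> 'a list list \<Rightarrow> bool" where
  "transition_walk V E k W \<longleftrightarrow> W \<noteq> [] \<and> (\<forall>C \<in> set W. configuration V E k C) \<and>
     (\<forall>t < length W - 1. adjacent_conf E (W ! t) (W ! Suc t))"

definition spanning :: "'a set \<Rightarrow> 'a list list \<Rightarrow> bool" where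
  "spanning V W \<longleftrightarrow> (\<forall>v\<in>V. \<exists>C\<in>set W. v \<in> set C)"

definition h :: "'a set \<Rightarrow> ('a \<times> 'a) set \<Rightarrow> nat \<Rightarrow> nat" where
  "h V E k = (LEAST l. \<exists>W. transition_walk V E k W \<and> spanning V W \<and> length W = Suc l)"

end

theory Submission
  imports Defs
begin

fun ewalk :: "('a \<times> 'a) set \<Rightarrow> 'a list \<Rightarrow> bool" where
  "ewalk E (x#y#ys) = ((x,y) \<in> E \<and> ewalk E (y#ys))"
| "ewalk E _ = True"

lemma ewalk_append:
  "ewalk E p \<Longrightarrow> ewalk E q \<Longrightarrow> p \<noteq> [] \<Longrightarrow> q \<noteq> [] \<Longrightarrow> last p = hd q \<Longrightarrow> ewalk E (p @ tl q)"
proof (induction E p rule: ewalk.induct)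
  case (1 E x y ys) then show ?case by auto
next
  case ("2_1" E) then show ?case by auto
next
  case ("2_2" E v) then show ?case by (cases q) auto
qed

lemma ewalk_nth: "ewalk E p \<Longrightarrow> i < length p - 1 \<Longrightarrow> (p!i, p!Suc i) \<in> E"
proof (induction E p arbitrary: i rule: ewalk.induct)
  case (1 E x y ys) then show ?case by (cases i) auto
qed auto

lemma path_ex:
  assumes "(u,v) \<in> (E \<inter> V \<times> V)\<^sup>*" "u \<in> V"
  shows "\<exists>p. p \<noteq> [] \<and> hd p = u \<and> last p = v \<and> ewalk E p \<and> set p \<subseteq> V"
  using assms
proof (induction rule: converse_rtrancl_induct)
  case base then show ?case by (intro exI[of _ "[v]"]) auto
next
  case (step y z)
  then obtain p where p: "p \<noteq> [] \<and> hd p = z \<and> last p = v \<and> ewalk E p \<and> set p \<subseteq> V" by auto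
  then show ?case using step(1) by (intro exI[of _ "y # p"]) (cases p, auto)
qed

lemma cover_ex:
  assumes "connected_graph V E" "x \<in> V" "finite S" "S \<subseteq> V"
  shows "\<exists>p. p \<noteq> [] \<and> hd p = x \<and> ewalk E p \<and> set p \<subseteq> V \<and> S \<subseteq> set p"
  using assms(3,4)
proof (induction S rule: finite_induct)
  case empty then show ?case using assms(2) by (intro exI[of _ "[x]"]) auto
next
  case (insert s S)
  then obtain p where p: "p \<noteq> [] \<and> hd p = x \<and> ewalk E p \<and> set p \<subseteq> V \<and> S \<subseteq> set p" by auto
  have lv: "last p \<in> V" using p by auto
  have ic: "\<forall>u\<in>V. \<forall>v\<in>V. (u, v) \<in> (E \<inter> V \<times> V)\<^sup>*"
    using assms(1) unfolding connected_graph_def induced_connected_def by blast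
  have sV: "s \<in> V" using insert.prems by simp
  have "(last p, s) \<in> (E \<inter> V \<times> V)\<^sup>*" using ic lv sV by blast
  then obtain q where q: "q \<noteq> [] \<and> hd q = last p \<and> last q = s \<and> ewalk E q \<and> set q \<subseteq> V"
    using path_ex[OF _ lv] by blast
  have lp: "last p \<in> set p" using p by simp
  have q1: "q = hd q # tl q" using q by (metis list.collapse)
  have "set q \<subseteq> set (p @ tl q)" using lp q1 q
    by (metis Un_iff insert_iff list.simps(15) set_append subsetI)
  moreover have "s \<in> set q" using q by (metis last_in_set)
  moreover have "ewalk E (p @ tl q)" using p q by (metis ewalk_append)
  moreover have "set (tl q) \<subseteq> set q" using q1 by (metis set_subset_Cons)
  moreover have "hd (p @ tl q) = x" using p by simp
  moreover have "p @ tl q \<noteq> []" using p by simp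
  ultimately show ?case using p q insert.prems
    by (intro exI[of _ "p @ tl q"]) auto
qed

lemma edge_conf:
  assumes "simple_graph V E" "(a,b) \<in> E"
  shows "configuration V E 2 [a,b]"
proof -
  have ab: "a \<noteq> b" "a \<in> V" "b \<in> V" "(b,a) \<in> E" using assms unfolding simple_graph_def sym_def by auto
  show ?thesis unfolding configuration_def induced_connected_def using ab assms(2)
    by (auto intro: r_into_rtrancl)
qed

lemma two_walk_ex:
  assumes "connected_graph V E" "card V \<ge> 2"
  shows "\<exists>W. transition_walk V E 2 W \<and> spanning V W"
proof -
  have sg: "simple_graph V E" using assms(1) connected_graph_def by auto
  hence fin: "finite V" by (simp add: simple_graph_def)
  obtain x where x: "x \<in> V" using assms(2) by fastforce
  obtain p where p: "p \<noteq> [] \<and> hd p = x \<and> ewalk E p \<and> set p \<subseteq> V \<and> V \<subseteq> set p"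
    using cover_ex[OF assms(1) x fin] by blast
  have "2 \<le> card (set p)" using p assms(2) by (metis antisym)
  hence lp: "length p \<ge> 2" using card_length order_trans by blast
  define W where "W = map (\<lambda>i. [p!Suc i, p!i]) [0..<length p - 1]"
  have e: "\<And>i. i < length p - 1 \<Longrightarrow> (p!i, p!Suc i) \<in> E" using ewalk_nth p by blast
  have es: "\<And>i. i < length p - 1 \<Longrightarrow> (p!Suc i, p!i) \<in> E"
    using e sg unfolding simple_graph_def sym_def by blast
  have "transition_walk V E 2 W"
    unfolding transition_walk_def
  proof (intro conjI ballI allI impI)
    show "W \<noteq> []" using lp W_def by auto
  next
    fix C assume "C \<in> set W"
    then obtain i where "i < length p - 1" "C = [p!Suc i, p!i]" unfolding W_def by auto
    then show "configuration V E 2 C" using edge_conf[OF sg es] by auto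
  next
    fix t assume "t < length W - 1"
    then show "adjacent_conf E (W ! t) (W ! Suc t)" unfolding W_def adjacent_conf_def
      using e es by (auto simp: less_2_cases_iff nth_Cons split: nat.splits)
  qed
  moreover have "spanning V W"
    unfolding spanning_def
  proof
    fix v assume "v \<in> V"
    then obtain j where j: "j < length p" "p!j = v" using p by (metis in_set_conv_nth subsetD)
    show "\<exists>C\<in>set W. v \<in> set C"
    proof (cases j)
      case 0
      then show ?thesis using j lp unfolding W_def by (intro bexI[of _ "[p!1, p!0]"]) force+
    next
      case (Suc i)
      then show ?thesis using j lp unfolding W_def by (intro bexI[of _ "[p!Suc i, p!i]"]) force+
    qed
  qed
  ultimately show ?thesis by blast
qed

lemma two_rt:
  assumes "(a,y) \<in> (E \<inter> {a,b} \<times> {a,b})\<^sup>*" "\<forall>v. (v,v) \<notin> E"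
  shows "y = a \<or> (a,y) \<in> E"
  using assms(1)
proof (induction rule: rtrancl_induct)
  case base then show ?case by simp
next
  case (step y z)
  then show ?case using assms(2) by blast
qed

lemma conf2:
  assumes "simple_graph V E" "configuration V E 2 C"
  shows "\<exists>a b. C = [a,b] \<and> (a,b) \<in> E \<and> (b,a) \<in> E \<and> a \<in> V \<and> b \<in> V"
proof -
  have l: "length C = 2" using assms(2) configuration_def by blast
  then have c: "C = [C!0, C!1]"
    by (metis One_nat_def Suc_1 length_0_conv length_Suc_conv nth_Cons_0 nth_Cons_Suc)
  define a where "a = C!0"
  define b where "b = C!1"
  have cab: "C = [a,b]" using c a_def b_def by simp
  have d: "a \<noteq> b" using assms(2) cab unfolding configuration_def by auto
  have "(a,b) \<in> (E \<inter> {a,b} \<times> {a,b})\<^sup>*" using assms(2) cab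
    unfolding configuration_def induced_connected_def by auto
  then have ab: "(a,b) \<in> E" using two_rt[of a b E b] d assms(1) unfolding simple_graph_def by blast
  then have ba: "(b,a) \<in> E" using assms(1) unfolding simple_graph_def sym_def by blast
  have "a \<in> V" "b \<in> V" using assms(2) cab unfolding configuration_def by auto
  then show ?thesis using cab ab ba by blast
qed

theorem mainTheorem8:
  fixes V :: "'a set" and E :: "('a \<times> 'a) set"
  assumes "connected_graph V E" and "card V \<ge> 2"
  shows "h V E 1 \<le> 2 * h V E 2 + 1"
proof -
  have sg: "simple_graph V E" using assms(1) connected_graph_def by auto
  obtain W0 where W0: "transition_walk V E 2 W0 \<and> spanning V W0"
    using two_walk_ex[OF assms] by blast
  have "\<exists>l. \<exists>W. transition_walk V E 2 W \<and> spanning V W \<and> length W = Suc l"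
    using W0 unfolding transition_walk_def by (intro exI[of _ "length W0 - 1"]) auto
  then have "\<exists>W. transition_walk V E 2 W \<and> spanning V W \<and> length W = Suc (h V E 2)"
    unfolding h_def by (rule LeastI_ex)
  then obtain W where tw: "transition_walk V E 2 W" and sp: "spanning V W"
    and lW: "length W = Suc (h V E 2)" by blast
  define n where "n = length W"
  have cW: "\<And>t. t < n \<Longrightarrow> \<exists>a b. W!t = [a,b] \<and> (a,b) \<in> E \<and> (b,a) \<in> E \<and> a \<in> V \<and> b \<in> V"
    using tw conf2[OF sg] unfolding transition_walk_def n_def by auto
  have aW: "\<And>t. Suc t < n \<Longrightarrow> adjacent_conf E (W!t) (W!Suc t)"
    using tw unfolding transition_walk_def n_def by auto
  define g where "g j = W!(j div 2)!((j div 2 + j mod 2) mod 2)" for j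
  define U where "U = map (\<lambda>j. [g j]) [0..<2*n]"
  have gV: "\<And>j. j < 2*n \<Longrightarrow> g j \<in> V"
  proof -
    fix j assume j: "j < 2*n"
    then have "j div 2 < n" by simp
    then obtain a b where ab: "W!(j div 2) = [a,b]" "a \<in> V" "b \<in> V" using cW by blast
    have i: "(j div 2 + j mod 2) mod 2 = 0 \<or> (j div 2 + j mod 2) mod 2 = Suc 0"
      by (rule less_2_cases) simp
    show "g j \<in> V" using i ab unfolding g_def by auto
  qed
  have gA: "\<And>j. Suc j < 2*n \<Longrightarrow> g j = g (Suc j) \<or> (g j, g (Suc j)) \<in> E"
  proof -
    fix j assume j: "Suc j < 2*n"
    show "g j = g (Suc j) \<or> (g j, g (Suc j)) \<in> E"
    proof (cases "even j")
      case True
      then obtain t where t: "j = 2*t" by blast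
      then have "t < n" using j by simp
      then obtain a b where ab: "W!t = [a,b]" "(a,b) \<in> E" "(b,a) \<in> E" using cW by blast
      have "g j = W!t!(t mod 2)" "g (Suc j) = W!t!((t+1) mod 2)"
        unfolding g_def t by auto
      moreover have "t mod 2 = 0 \<and> (t+1) mod 2 = Suc 0 \<or> t mod 2 = Suc 0 \<and> (t+1) mod 2 = 0"
        by presburger
      ultimately show ?thesis using ab by auto
    next
      case False
      then obtain t where t: "j = 2*t+1" using oddE by blast
      then have tn: "Suc t < n" using j by simp
      have g1: "g j = W!t!((t+1) mod 2)" unfolding g_def t by simp
      have e2a: "Suc (2*t+1) = 2 * Suc t" by simp
      have e2: "Suc (2*t+1) div 2 = Suc t" "(Suc t + Suc (2*t+1) mod 2) mod 2 = (t+1) mod 2"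
        unfolding e2a by simp_all
      have g2: "g (Suc j) = W!(Suc t)!((t+1) mod 2)" unfolding g_def t e2 by simp
      have "t < n" using tn by simp
      then obtain a b where "W!t = [a,b]" using cW by blast
      then have "length (W!t) = 2" by simp
      then have "(t+1) mod 2 < length (W!t)" by simp
      then show ?thesis using aW[OF tn] g1 g2 unfolding adjacent_conf_def by simp
    qed
  qed
  have twU: "transition_walk V E 1 U"
    unfolding transition_walk_def
  proof (intro conjI ballI allI impI)
    show "U \<noteq> []" unfolding U_def n_def using lW by simp
  next
    fix C assume "C \<in> set U"
    then obtain j where j: "j < 2*n" "C = [g j]" unfolding U_def by auto
    then show "configuration V E 1 C" using gV[OF j(1)]
      unfolding configuration_def induced_connected_def by auto
  next
    fix t assume "t < length U - 1"
    then have tt: "Suc t < 2*n" unfolding U_def by simp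
    then show "adjacent_conf E (U ! t) (U ! Suc t)" unfolding U_def adjacent_conf_def
      using gA[OF tt] by (auto simp: less_Suc_eq)
  qed
  have spU: "spanning V U"
    unfolding spanning_def
  proof
    fix v assume "v \<in> V"
    then obtain C where C: "C \<in> set W" "v \<in> set C" using sp unfolding spanning_def by blast
    then obtain t where t: "t < n" "W!t = C" unfolding n_def by (metis in_set_conv_nth)
    then obtain a b where ab: "C = [a,b]" using cW by blast
    have "\<exists>j < 2*n. g j = v"
    proof (cases "v = a")
      case True
      have e1: "(2*t + t mod 2) div 2 = t" "(2*t + t mod 2) mod 2 = t mod 2"
        "(t + t mod 2) mod 2 = 0" by presburger+
      have "g (2*t + t mod 2) = v" unfolding g_def e1 using True ab t by simp
      moreover have "2*t + t mod 2 < 2*n" using t by presburger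
      ultimately show ?thesis by blast
    next
      case False
      then have vb: "v = b" using ab C by auto
      have e1: "(2*t + (t+1) mod 2) div 2 = t" "(2*t + (t+1) mod 2) mod 2 = (t+1) mod 2"
        "(t + (t+1) mod 2) mod 2 = Suc 0" by presburger+
      have "g (2*t + (t+1) mod 2) = v" unfolding g_def e1 using vb ab t by simp
      moreover have "2*t + (t+1) mod 2 < 2*n" using t by presburger
      ultimately show ?thesis by blast
    qed
    then obtain j where j: "j < 2*n" "g j = v" by blast
    show "\<exists>C\<in>set U. v \<in> set C" unfolding U_def using j
      by (intro bexI[of _ "[g j]"]) auto
  qed
  have "length U = Suc (2 * h V E 2 + 1)" unfolding U_def n_def lW by simp
  then have "\<exists>W. transition_walk V E 1 W \<and> spanning V W \<and> length W = Suc (2 * h V E 2 + 1)"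
    using twU spU by blast
  then show ?thesis unfolding h_def[of V E 1] by (rule Least_le)
qed

end
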